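(* Let $N\in\mathbb{N}$, Polish spaces $(\mathcal{X}_i,d_{\mathcal{X}_i})$, $\boldsymbol{\mathcal{X}}:=\mathcal{X}_1\times\cdots\times\mathcal{X}_N$, $\mu_i\in\mathcal{P}_1(\mathcal{X}_i)$, and $f:\boldsymbol{\mathcal{X}}\to\mathbb{R}$ lower semi-continuous admitting upper semi-continuous $h_i\in\mathcal{L}^1(\mathcal{X}_i,\mu_i)$ with $\sum_ih_i(x_i)\le f(\boldsymbol{x})$ for all $\boldsymbol{x}$. Let $\mathcal{G}_i=\{g_{i,1},\ldots,g_{i,m_i}\}\subset\mathcal{L}^1(\mathcal{X}_i,\mu_i)$, $m_i\in\mathbb{N}$, $m:=\sum_im_i$; let $\boldsymbol{g}_i(x_i):=(g_{i,1}(x_i),\ldots,g_{i,m_i}(x_i))^\top$, $\boldsymbol{g}(\boldsymbol{x}):=(\boldsymbol{g}_1(x_1)^\top,\ldots,\boldsymbol{g}_N(x_N)^\top)^\top$, $\bar{\boldsymbol{g}}$ the vector of $\int g_{i,j}\,\mathrm{d}\mu_i$ in the same order, $K:=\operatorname{conv}(\{\boldsymbol{g}(\boldsymbol{x}):\boldsymbol{x}\in\boldsymbol{\mathcal{X}}\})$ and $C:=\operatorname{cone}(\{(1,\boldsymbol{g}(\boldsymbol{x})^\top,f(\boldsymbol{x}))^\top:\boldsymbol{x}\in\boldsymbol{\mathcal{X}}\})$. Then: (i) If for each $i$, $\operatorname{supp}(\mu_i)=\mathcal{X}_i$ and $g_{i,1},\ldots,g_{i,m_i}$ are continuous, then $\bar{\boldsymbol{g}}\in\operatorname{relint}(K)$.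 (ii) If, in addition to the assumptions of (i), for each $i$ there exist $x_{i,1},\ldots,x_{i,m_i+1}\in\mathcal{X}_i$ such that $\boldsymbol{g}_i(x_{i,1}),\ldots,\boldsymbol{g}_i(x_{i,m_i+1})$ are affinely independent, then $\bar{\boldsymbol{g}}\in\operatorname{int}(K)$. (iii) If for each $i$, $\mathcal{X}_i$ is compact and $\mathcal{G}_i$ contains only continuous functions, and $f$ is continuous, then $C$ is closed.
   Context: $\mathcal{P}_1(\mathcal{X}_i)$: Borel probability measures on $\mathcal{X}_i$ with finite first moment. $\operatorname{conv}$, $\operatorname{cone}$, $\operatorname{relint}$, $\operatorname{int}$ denote convex hull, conic hull, relative interior and interior. *)

theory Defs
  imports "HOL-Analysis.Analysis" "HOL-Probability.Probability"
begin

definition lsc_on :: "'a topology \<Rightarrow> ('a \<Rightarrow> real) \<Rightarrow> bool" where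
  "lsc_on X f \<longleftrightarrow> (\<forall>t. openin X {x \<in> topspace X. t < f x})"

definition usc_on :: "'a topology \<Rightarrow> ('a \<Rightarrow> real) \<Rightarrow> bool" where
  "usc_on X f \<longleftrightarrow> (\<forall>t. openin X {x \<in> topspace X. f x < t})"

definition measure_support :: "'a topology \<Rightarrow> 'a measure \<Rightarrow> 'a set" where
  "measure_support X \<mu> = {x \<in> topspace X. \<forall>U. openin X U \<and> x \<in> U \<longrightarrow> emeasure \<mu> U > 0}"

definition polish_metric :: "'a set \<Rightarrow> ('a \<Rightarrow> 'a \<Rightarrow> real) \<Rightarrow> bool" where
  "polish_metric M d \<longleftrightarrow> Metric_space M d \<and> Metric_space.mcomplete M d
      \<and> separable_space (Metric_space.mtopology M d)"

definition P1 :: "'a set \<Rightarrow> ('a \<Rightarrow> 'a \<Rightarrow> real) \<Rightarrow> 'a measure \<Rightarrow> bool" where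
  "P1 M d \<mu> \<longleftrightarrow> prob_space \<mu> \<and> space \<mu> = M
      \<and> sets \<mu> = sigma_sets M {U. openin (Metric_space.mtopology M d) U}
      \<and> (\<exists>x0\<in>M. integrable \<mu> (\<lambda>x. d x0 x))"

end

theory Submission
  imports Defs
begin


lemma exists_ge_mean:
  fixes f :: "'a \<Rightarrow> real"
  assumes "prob_space \<mu>" "integrable \<mu> f"
  shows "\<exists>y\<in>space \<mu>. integral\<^sup>L \<mu> f \<le> f y"
proof (rule ccontr)
  assume "\<not> ?thesis"
  then have lt: "\<forall>y\<in>space \<mu>. f y < integral\<^sup>L \<mu> f" by auto
  let ?c = "integral\<^sup>L \<mu> f"
  have int: "integrable \<mu> (\<lambda>y. ?c - f y)" using assms by (intro Bochner_Integration.integrable_diff finite_measure.integrable_const) (auto simp: prob_space_def)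
  have "integral\<^sup>L \<mu> (\<lambda>y. ?c - f y) = ?c - ?c"
    using assms int by (subst Bochner_Integration.integral_diff) (auto simp: prob_space.prob_space prob_space_def intro: finite_measure.integrable_const)
  then have "integral\<^sup>L \<mu> (\<lambda>y. ?c - f y) = 0" by simp
  moreover have "AE y in \<mu>. 0 \<le> ?c - f y" using lt by (intro AE_I2) auto
  ultimately have "AE y in \<mu>. ?c - f y = 0" using integral_nonneg_eq_0_iff_AE[OF int] by blast
  then have "AE y in \<mu>. False" by (rule AE_mp) (intro AE_I2, use lt in auto)
  then show False using prob_space.AE_False[OF assms(1)] by simp
qed

lemma le_mean_everywhere:
  fixes \<phi> :: "nat \<Rightarrow> 'a \<Rightarrow> real"
  assumes prob: "\<And>i. i < N \<Longrightarrow> prob_space (\<mu> i)"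
    and sp: "\<And>i. i < N \<Longrightarrow> space (\<mu> i) = M i"
    and int: "\<And>i. i < N \<Longrightarrow> integrable (\<mu> i) (\<phi> i)"
    and ineq: "\<And>x. x \<in> PiE {..<N} M \<Longrightarrow> (\<Sum>i<N. \<phi> i (x i)) \<le> (\<Sum>i<N. integral\<^sup>L (\<mu> i) (\<phi> i))"
    and i: "i < N" and y: "y \<in> M i"
  shows "\<phi> i y \<le> integral\<^sup>L (\<mu> i) (\<phi> i)"
proof -
  have "\<forall>j. \<exists>w. j < N \<longrightarrow> w \<in> M j \<and> integral\<^sup>L (\<mu> j) (\<phi> j) \<le> \<phi> j w"
    using exists_ge_mean[OF prob int] sp by metis
  then obtain w where w: "\<And>j. j < N \<Longrightarrow> w j \<in> M j \<and> integral\<^sup>L (\<mu> j) (\<phi> j) \<le> \<phi> j (w j)"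
    by metis
  define x where "x = (\<lambda>j. if j = i then y else if j < N then w j else undefined)"
  have x: "x \<in> PiE {..<N} M" using w y i by (auto simp: x_def PiE_def extensional_def)
  have "(\<Sum>j<N. \<phi> j (x j)) = \<phi> i y + (\<Sum>j\<in>{..<N}-{i}. \<phi> j (w j))"
    using i by (simp add: sum.remove[of "{..<N}" i] x_def)
  moreover have "(\<Sum>j<N. integral\<^sup>L (\<mu> j) (\<phi> j)) = integral\<^sup>L (\<mu> i) (\<phi> i) + (\<Sum>j\<in>{..<N}-{i}. integral\<^sup>L (\<mu> j) (\<phi> j))"
    using i by (simp add: sum.remove[of "{..<N}" i])
  moreover have "(\<Sum>j\<in>{..<N}-{i}. integral\<^sup>L (\<mu> j) (\<phi> j)) \<le> (\<Sum>j\<in>{..<N}-{i}. \<phi> j (w j))"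
    by (rule sum_mono) (use w in auto)
  ultimately show ?thesis using ineq[OF x] by linarith
qed

lemma eq_mean_everywhere:
  fixes \<phi> :: "nat \<Rightarrow> 'a \<Rightarrow> real"
  assumes prob: "\<And>i. i < N \<Longrightarrow> prob_space (\<mu> i)"
    and sp: "\<And>i. i < N \<Longrightarrow> space (\<mu> i) = M i"
    and int: "\<And>i. i < N \<Longrightarrow> integrable (\<mu> i) (\<phi> i)"
    and ineq: "\<And>x. x \<in> PiE {..<N} M \<Longrightarrow> (\<Sum>i<N. \<phi> i (x i)) \<le> (\<Sum>i<N. integral\<^sup>L (\<mu> i) (\<phi> i))"
    and top: "\<And>i. i < N \<Longrightarrow> topspace (T i) = M i"
    and opens: "\<And>i U. i < N \<Longrightarrow> openin (T i) U \<Longrightarrow> U \<in> sets (\<mu> i)"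
    and supp: "\<And>i U y. i < N \<Longrightarrow> openin (T i) U \<Longrightarrow> y \<in> U \<Longrightarrow> emeasure (\<mu> i) U > 0"
    and cont: "\<And>i. i < N \<Longrightarrow> continuous_map (T i) euclideanreal (\<phi> i)"
    and i: "i < N" and y: "y \<in> M i"
  shows "\<phi> i y = integral\<^sup>L (\<mu> i) (\<phi> i)"
proof (rule ccontr)
  let ?c = "integral\<^sup>L (\<mu> i) (\<phi> i)"
  have le: "\<And>z. z \<in> M i \<Longrightarrow> \<phi> i z \<le> ?c"
    using le_mean_everywhere[OF prob sp int ineq i] by blast
  assume "\<phi> i y \<noteq> ?c"
  with le[OF y] have ylt: "\<phi> i y < ?c" by simp
  define U where "U = {z \<in> topspace (T i). \<phi> i z \<in> {..<?c}}"
  have oU: "openin (T i) U" unfolding U_def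
    by (rule openin_continuous_map_preimage[OF cont[OF i]]) auto
  have yU: "y \<in> U" using ylt y top[OF i] by (auto simp: U_def)
  have intd: "integrable (\<mu> i) (\<lambda>z. ?c - \<phi> i z)" using int[OF i] prob[OF i] by (intro Bochner_Integration.integrable_diff finite_measure.integrable_const) (auto simp: prob_space_def)
  have "integral\<^sup>L (\<mu> i) (\<lambda>z. ?c - \<phi> i z) = ?c - ?c"
    using int[OF i] prob[OF i] by (subst Bochner_Integration.integral_diff) (auto simp: prob_space.prob_space prob_space_def intro: finite_measure.integrable_const)
  then have "integral\<^sup>L (\<mu> i) (\<lambda>z. ?c - \<phi> i z) = 0" by simp
  moreover have "AE z in \<mu> i. 0 \<le> ?c - \<phi> i z" using le sp[OF i] by (intro AE_I2) auto
  ultimately have ae: "AE z in \<mu> i. ?c - \<phi> i z = 0" using integral_nonneg_eq_0_iff_AE[OF intd] by blast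
  have "AE z in \<mu> i. z \<notin> U" by (rule AE_mp[OF ae]) (intro AE_I2, auto simp: U_def)
  then have "U \<in> null_sets (\<mu> i)" using AE_iff_null_sets opens[OF i oU] by blast
  then show False using supp[OF i oU yU] by auto
qed


lemma dim_block:
  fixes owner :: "'m::finite \<Rightarrow> nat"
  shows "dim {v::real^'m. \<forall>k. owner k \<noteq> i \<longrightarrow> v$k = 0} = card {k. owner k = i}"
proof -
  let ?d = "(\<lambda>k. axis k 1 :: real^'m) ` {k. owner k = i}"
  have dB: "?d \<subseteq> Basis" by (auto simp: Basis_vec_def)
  have eq: "{v::real^'m. \<forall>k. owner k \<noteq> i \<longrightarrow> v$k = 0} = {x. \<forall>b\<in>Basis. b \<notin> ?d \<longrightarrow> x \<bullet> b = 0}"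
  proof (intro set_eqI iffI)
    fix x :: "real^'m" assume "x \<in> {v. \<forall>k. owner k \<noteq> i \<longrightarrow> v$k = 0}"
    then show "x \<in> {x. \<forall>b\<in>Basis. b \<notin> ?d \<longrightarrow> x \<bullet> b = 0}"
      by (auto simp: Basis_vec_def inner_axis)
  next
    fix x :: "real^'m" assume x: "x \<in> {x. \<forall>b\<in>Basis. b \<notin> ?d \<longrightarrow> x \<bullet> b = 0}"
    show "x \<in> {v. \<forall>k. owner k \<noteq> i \<longrightarrow> v$k = 0}"
    proof (clarify)
      fix k assume "owner k \<noteq> i"
      then have "axis k 1 \<notin> ?d" by (auto simp: axis_eq_axis)
      moreover have "axis k (1::real) \<in> Basis" by (auto simp: Basis_vec_def)
      ultimately have "x \<bullet> axis k 1 = 0" using x by blast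
      then show "x$k = 0" by (simp add: inner_axis)
    qed
  qed
  have "card ?d = card {k. owner k = i}"
    by (rule card_image) (auto simp: inj_on_def axis_eq_axis)
  then show ?thesis unfolding eq using dim_substandard[OF dB] by simp
qed

lemma block_zero:
  fixes owner :: "'m::finite \<Rightarrow> nat" and gb :: "'a \<Rightarrow> real^'m" and a :: "real^'m"
  assumes inblock: "\<And>y k. owner k \<noteq> i \<Longrightarrow> gb y $ k = 0"
    and const: "\<And>j. j \<le> n \<Longrightarrow> a \<bullet> gb (xs j) = c"
    and n: "n = card {k. owner k = i}"
    and inj: "inj_on (\<lambda>j. gb (xs j)) {..n}"
    and ind: "\<not> affine_dependent ((\<lambda>j. gb (xs j)) ` {..n})"
    and k: "owner k = i"
  shows "a$k = 0"
proof (rule ccontr)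
  assume ak: "a$k \<noteq> 0"
  define b :: "real^'m" where "b = (\<chi> k. if owner k = i then a$k else 0)"
  define V where "V = {v::real^'m. \<forall>k. owner k \<noteq> i \<longrightarrow> v$k = 0}"
  define A where "A = V \<inter> {v. b \<bullet> v = c}"
  define P where "P = (\<lambda>j. gb (xs j)) ` {..n}"
  have bV: "b \<in> V" by (simp add: b_def V_def)
  have b0: "b \<noteq> 0" using ak k by (auto simp: b_def vec_eq_iff)
  have ab: "a \<bullet> v = b \<bullet> v" if "v \<in> V" for v
    using that unfolding V_def b_def inner_vec_def
    by (intro sum.cong) auto
  have gbV: "gb y \<in> V" for y using inblock by (auto simp: V_def)
  have PA: "P \<subseteq> A" using const ab gbV by (auto simp: P_def A_def)
  have subV: "subspace V" by (auto simp: subspace_def V_def)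
  have affA: "affine A" unfolding A_def
    by (intro affine_Int subspace_imp_affine subV affine_hyperplane)
  have AV: "A \<subset> V"
  proof
    show "A \<subseteq> V" by (auto simp: A_def)
    show "A \<noteq> V"
    proof (cases "c = 0")
      case True
      have "b \<bullet> b \<noteq> 0" using b0 by simp
      then have "b \<notin> A" using True by (auto simp: A_def)
      then show ?thesis using bV by blast
    next
      case False
      then have "0 \<notin> A" by (auto simp: A_def)
      then show ?thesis using subspace_0[OF subV] by blast
    qed
  qed
  have "aff_dim A < aff_dim V"
  proof (rule aff_dim_psubset)
    have h1: "affine hull A = A" using affA by (simp add: affine_hull_eq)
    have h2: "affine hull V = V" using subspace_imp_affine[OF subV] by (simp add: affine_hull_eq)
    show "affine hull A \<subset> affine hull V" by (subst h1, subst h2, rule AV)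
  qed
  also have "aff_dim V = int n"
    using aff_dim_subspace[OF subV] dim_block[of owner i] n by (simp add: V_def)
  finally have lt: "aff_dim A < int n" .
  have "card P = Suc n" unfolding P_def using card_image[OF inj] by simp
  then have "aff_dim P = int n" using aff_dim_affine_independent[of P] ind by (simp add: P_def)
  moreover have "aff_dim P \<le> aff_dim A" using PA aff_dim_subset by blast
  ultimately show False using lt by simp
qed

lemma vec_cont:
  fixes h :: "'m::finite \<Rightarrow> 'b \<Rightarrow> real"
  assumes "\<And>k. continuous_map X euclideanreal (h k)"
  shows "continuous_map X euclidean (\<lambda>x. (\<chi> k. h k x) :: real ^ 'm)"
proof -
  have eq: "(\<lambda>x. (\<chi> k. h k x) :: real ^ 'm) = (\<lambda>x. \<Sum>k\<in>UNIV. h k x *\<^sub>R axis k 1)"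
    by (rule ext) (simp add: vec_eq_iff axis_def mult.commute[of "h _ _"] if_distrib[of "\<lambda>t. t * _"] sum.delta cong: if_cong)
  have "continuous_map X euclidean (\<lambda>x. h k x *\<^sub>R (axis k 1 :: real^'m))" for k
  proof -
    have "continuous_map euclideanreal euclidean (\<lambda>r. r *\<^sub>R (axis k 1 :: real^'m))"
      by (simp add: continuous_on_scaleR continuous_on_id continuous_on_const)
    from continuous_map_compose[OF assms[of k] this] show ?thesis by (simp add: o_def)
  qed
  then show ?thesis unfolding eq by (intro continuous_map_sum) auto
qed
lemma part3:
  fixes F :: "'b \<Rightarrow> real \<times> ('c::euclidean_space)"
  assumes "compact_space X" "continuous_map X euclidean F" "\<And>x. fst (F x) = 1"
  shows "closed (convex_cone hull (F ` topspace X))"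
proof -
  let ?S = "F ` topspace X"
  have "compactin euclidean ?S"
    using image_compactin[OF assms(1)[unfolded compact_space_def] assms(2)] .
  then have cS: "compact ?S" by simp
  have "convex hull ?S \<subseteq> {p. fst p = 1}"
    by (rule hull_minimal) (auto simp: assms(3) convex_def)
  then have "0 \<notin> convex hull ?S" by auto
  moreover have "compact (convex hull ?S)" using cS compact_convex_hull by blast
  ultimately have "closed (conic hull (convex hull ?S))"
    using closed_conic_hull by blast
  then show ?thesis by (simp add: convex_cone_hull_separate closed_insert)
qed



theorem proposition2p15:
  fixes N :: nat
    and M :: "nat \<Rightarrow> 'a set"
    and d :: "nat \<Rightarrow> 'a \<Rightarrow> 'a \<Rightarrow> real"
    and \<mu> :: "nat \<Rightarrow> 'a measure"
    and f :: "(nat \<Rightarrow> 'a) \<Rightarrow> real"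
    and h :: "nat \<Rightarrow> 'a \<Rightarrow> real"
    and owner :: "'m::finite \<Rightarrow> nat"
    and g :: "'m \<Rightarrow> 'a \<Rightarrow> real"
  assumes polish: "\<And>i. i < N \<Longrightarrow> polish_metric (M i) (d i)"
    and mu: "\<And>i. i < N \<Longrightarrow> P1 (M i) (d i) (\<mu> i)"
    and f_lsc: "lsc_on (product_topology (\<lambda>i. Metric_space.mtopology (M i) (d i)) {..<N}) f"
    and h_usc: "\<And>i. i < N \<Longrightarrow> usc_on (Metric_space.mtopology (M i) (d i)) (h i)"
    and h_int: "\<And>i. i < N \<Longrightarrow> integrable (\<mu> i) (h i)"
    and h_le: "\<And>x. x \<in> PiE {..<N} M \<Longrightarrow> (\<Sum>i<N. h i (x i)) \<le> f x"
    and owner: "\<And>k. owner k < N"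
    and g_int: "\<And>k. integrable (\<mu> (owner k)) (g k)"
  defines "gblock \<equiv> (\<lambda>i (y::'a). (\<chi> k. if owner k = i then g k y else 0) :: real ^ 'm)"
    and "mblock \<equiv> (\<lambda>i. card {k. owner k = i})"
    and "gbar \<equiv> ((\<chi> k. integral\<^sup>L (\<mu> (owner k)) (g k)) :: real ^ 'm)"
    and "K \<equiv> convex hull ((\<lambda>x. (\<chi> k. g k (x (owner k))) :: real ^ 'm) ` PiE {..<N} M)"
    and "C \<equiv> convex_cone hull ((\<lambda>x. (1::real, (\<chi> k. g k (x (owner k))) :: real ^ 'm, f x)) ` PiE {..<N} M)"
  shows
    "((\<forall>i<N. measure_support (Metric_space.mtopology (M i) (d i)) (\<mu> i) = M i)
        \<and> (\<forall>k. continuous_map (Metric_space.mtopology (M (owner k)) (d (owner k))) euclideanreal (g k))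
        \<longrightarrow> gbar \<in> rel_interior K)
   \<and> ((\<forall>i<N. measure_support (Metric_space.mtopology (M i) (d i)) (\<mu> i) = M i)
        \<and> (\<forall>k. continuous_map (Metric_space.mtopology (M (owner k)) (d (owner k))) euclideanreal (g k))
        \<and> (\<forall>i<N. \<exists>xs :: nat \<Rightarrow> 'a. (\<forall>j\<le>mblock i. xs j \<in> M i)
               \<and> inj_on (\<lambda>j. gblock i (xs j)) {..mblock i}
               \<and> \<not> affine_dependent ((\<lambda>j. gblock i (xs j)) ` {..mblock i}))
        \<longrightarrow> gbar \<in> interior K)
   \<and> ((\<forall>i<N. compact_space (Metric_space.mtopology (M i) (d i)))
        \<and> (\<forall>k. continuous_map (Metric_space.mtopology (M (owner k)) (d (owner k))) euclideanreal (g k))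
        \<and> continuous_map (product_topology (\<lambda>i. Metric_space.mtopology (M i) (d i)) {..<N}) euclideanreal f
        \<longrightarrow> closed C)"
  proof -
  let ?T = "\<lambda>i. Metric_space.mtopology (M i) (d i)"
  define G :: "(nat \<Rightarrow> 'a) \<Rightarrow> real^'m" where "G = (\<lambda>x. \<chi> k. g k (x (owner k)))"
  define phi where "phi = (\<lambda>(a::real^'m) i y. \<Sum>k\<in>{k. owner k = i}. a$k * g k y)"
  have K': "K = convex hull (G ` PiE {..<N} M)" by (simp add: K_def G_def)
  have met: "Metric_space (M i) (d i)" if "i < N" for i using polish[OF that] by (simp add: polish_metric_def)
  have top: "topspace (?T i) = M i" if "i < N" for i using Metric_space.topspace_mtopology[OF met[OF that]] .
  have prob: "prob_space (\<mu> i)" if "i < N" for i using mu[OF that] by (simp add: P1_def)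
  have sp: "space (\<mu> i) = M i" if "i < N" for i using mu[OF that] by (simp add: P1_def)
  have opens: "U \<in> sets (\<mu> i)" if "i < N" "openin (?T i) U" for i U
    using mu[OF that(1)] that(2) by (auto simp: P1_def intro: sigma_sets.Basic)
  have Mne: "M i \<noteq> {}" if "i < N" for i using prob_space.not_empty[OF prob[OF that]] sp[OF that] by simp
  have PiEne: "PiE {..<N} M \<noteq> {}" using Mne by (auto simp: PiE_eq_empty_iff)
  have topP: "topspace (product_topology ?T {..<N}) = PiE {..<N} M"
  proof -
    have "topspace (product_topology ?T {..<N}) = PiE {..<N} (\<lambda>i. topspace (?T i))"
      by (simp only: topspace_product_topology)
    also have "\<dots> = PiE {..<N} M" by (rule PiE_cong) (simp add: top)
    finally show ?thesis .
  qed
  have grp: "a \<bullet> v = (\<Sum>i<N. \<Sum>k\<in>{k. owner k = i}. a$k * v$k)" for a v :: "real^'m"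
  proof -
    have "a \<bullet> v = (\<Sum>k\<in>UNIV. a$k * v$k)" by (simp add: inner_vec_def)
    also have "\<dots> = (\<Sum>i<N. \<Sum>k\<in>{k\<in>UNIV. owner k = i}. a$k * v$k)"
      by (rule sum.group[symmetric]) (use owner in auto)
    finally show ?thesis by simp
  qed
  have innerG: "a \<bullet> G x = (\<Sum>i<N. phi a i (x i))" for a x
    unfolding grp phi_def G_def by (intro sum.cong refl) auto
  have intphi: "integrable (\<mu> i) (phi a i)" if "i < N" for a i
  proof -
    have "integrable (\<mu> i) (\<lambda>y. a$k * g k y)" if "k \<in> {k. owner k = i}" for k
      using g_int[of k] that by auto
    then show ?thesis unfolding phi_def by (rule Bochner_Integration.integrable_sum)
  qed
  have intphi_eq: "integral\<^sup>L (\<mu> i) (phi a i) = (\<Sum>k\<in>{k. owner k = i}. a$k * integral\<^sup>L (\<mu> i) (g k))" for a i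
  proof -
    have ii: "integrable (\<mu> i) (\<lambda>y. a$k * g k y)" if "k \<in> {k. owner k = i}" for k
      using g_int[of k] that by auto
    have "integral\<^sup>L (\<mu> i) (phi a i) = (\<Sum>k\<in>{k. owner k = i}. integral\<^sup>L (\<mu> i) (\<lambda>y. a$k * g k y))"
      unfolding phi_def by (rule Bochner_Integration.integral_sum) (use ii in blast)
    also have "\<dots> = (\<Sum>k\<in>{k. owner k = i}. a$k * integral\<^sup>L (\<mu> i) (g k))"
      by (intro sum.cong refl) simp
    finally show ?thesis .
  qed
  have innergbar: "a \<bullet> gbar = (\<Sum>i<N. integral\<^sup>L (\<mu> i) (phi a i))" for a
    unfolding grp intphi_eq gbar_def by (intro sum.cong refl) auto
  have gblock_phi: "a \<bullet> gblock i y = phi a i y" for a i y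
  proof -
    have "a \<bullet> gblock i y = (\<Sum>k\<in>UNIV. if owner k = i then a$k * g k y else 0)"
      by (simp add: gblock_def inner_vec_def if_distrib cong: if_cong)
    also have "\<dots> = (\<Sum>k\<in>{k\<in>UNIV. owner k = i}. a$k * g k y)"
      by (rule sum.inter_filter[symmetric]) simp
    finally show ?thesis by (simp add: phi_def)
  qed
  have core: "\<forall>i<N. \<forall>y\<in>M i. phi a i y = integral\<^sup>L (\<mu> i) (phi a i)"
    if supp: "\<forall>i<N. measure_support (?T i) (\<mu> i) = M i"
      and contg: "\<forall>k. continuous_map (?T (owner k)) euclideanreal (g k)"
      and le: "\<forall>x\<in>PiE {..<N} M. a \<bullet> G x \<le> a \<bullet> gbar" for a
  proof (intro allI impI ballI)
    fix i y assume i: "i < N" and y: "y \<in> M i"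
    show "phi a i y = integral\<^sup>L (\<mu> i) (phi a i)"
    proof (rule eq_mean_everywhere[where N=N and M=M and \<mu>=\<mu> and T="?T"])
      show "prob_space (\<mu> i)" if "i < N" for i using prob that .
      show "space (\<mu> i) = M i" if "i < N" for i using sp that .
      show "integrable (\<mu> i) (phi a i)" if "i < N" for i using intphi that .
      show "(\<Sum>i<N. phi a i (x i)) \<le> (\<Sum>i<N. integral\<^sup>L (\<mu> i) (phi a i))" if "x \<in> PiE {..<N} M" for x
      proof -
        have "a \<bullet> G x \<le> a \<bullet> gbar" using le that by blast
        then show ?thesis by (simp only: innerG innergbar)
      qed
      show "topspace (?T i) = M i" if "i < N" for i using top that .
      show "U \<in> sets (\<mu> i)" if "i < N" "openin (?T i) U" for i U using opens that .
      show "emeasure (\<mu> i) U > 0" if "i < N" "openin (?T i) U" "y \<in> U" for i U y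
      proof -
        have "y \<in> M i" using that openin_subset top by blast
        then show ?thesis using supp that unfolding measure_support_def by blast
      qed
      show "continuous_map (?T i) euclideanreal (phi a i)" if "i < N" for i
        unfolding phi_def using contg
        by (intro continuous_map_sum continuous_map_real_mult_left) auto
    qed (use i y in auto)
  qed
  have coreK: "\<forall>v\<in>K. a \<bullet> v = a \<bullet> gbar"
    if supp: "\<forall>i<N. measure_support (?T i) (\<mu> i) = M i"
      and contg: "\<forall>k. continuous_map (?T (owner k)) euclideanreal (g k)"
      and le: "\<forall>x\<in>PiE {..<N} M. a \<bullet> G x \<le> a \<bullet> gbar" for a
  proof -
    have c: "\<forall>i<N. \<forall>y\<in>M i. phi a i y = integral\<^sup>L (\<mu> i) (phi a i)" using core[OF supp contg le] .
    have "G x \<in> {v. a \<bullet> v = a \<bullet> gbar}" if "x \<in> PiE {..<N} M" for x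
    proof -
      have "(\<Sum>i<N. phi a i (x i)) = (\<Sum>i<N. integral\<^sup>L (\<mu> i) (phi a i))"
        using c that by (intro sum.cong refl) (auto simp: PiE_def Pi_def)
      then show ?thesis by (simp add: innerG innergbar)
    qed
    then have "K \<subseteq> {v. a \<bullet> v = a \<bullet> gbar}" unfolding K'
      by (intro hull_minimal) (auto simp: convex_hyperplane)
    then show ?thesis by auto
  qed
  have Kne: "K \<noteq> {}" using PiEne unfolding K' by simp
  have GK: "G x \<in> K" if "x \<in> PiE {..<N} M" for x unfolding K' using that by (auto intro: hull_inc)
  have convK: "convex K" unfolding K' by simp
  have part1: "gbar \<in> rel_interior K"
    if supp: "\<forall>i<N. measure_support (?T i) (\<mu> i) = M i"
      and contg: "\<forall>k. continuous_map (?T (owner k)) euclideanreal (g k)"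
  proof (rule ccontr)
    assume nr: "gbar \<notin> rel_interior K"
    obtain x0 where x0: "x0 \<in> PiE {..<N} M" using PiEne by blast
    show False
    proof (cases "gbar \<in> closure K")
      case False
      obtain a b where ab: "a \<bullet> gbar < b" "\<forall>x\<in>closure K. a \<bullet> x > b"
        using separating_hyperplane_closed_point[OF convex_closure[OF convK] closed_closure False] by blast
      have lt: "(-a) \<bullet> G x < (-a) \<bullet> gbar" if "x \<in> PiE {..<N} M" for x
      proof -
        have "G x \<in> closure K" using GK[OF that] closure_subset by blast
        then have "a \<bullet> G x > b" using ab(2) by blast
        then show ?thesis using ab(1) by simp
      qed
      have "\<forall>v\<in>K. (-a) \<bullet> v = (-a) \<bullet> gbar"
        by (rule coreK[OF supp contg]) (use lt in \<open>blast intro: less_imp_le\<close>)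
      then show False using lt[OF x0] GK[OF x0] by auto
    next
      case True
      obtain a where a: "\<And>y. y \<in> closure K \<Longrightarrow> a \<bullet> gbar \<le> a \<bullet> y"
        "\<And>y. y \<in> rel_interior K \<Longrightarrow> a \<bullet> gbar < a \<bullet> y"
        using supporting_hyperplane_relative_frontier[OF convK True nr] by blast
      obtain y where y: "y \<in> rel_interior K" using rel_interior_eq_empty[OF convK] Kne by blast
      have "(-a) \<bullet> G x \<le> (-a) \<bullet> gbar" if "x \<in> PiE {..<N} M" for x
      proof -
        have "G x \<in> closure K" using GK[OF that] closure_subset by blast
        then show ?thesis using a(1)[of "G x"] by simp
      qed
      then have "\<forall>v\<in>K. (-a) \<bullet> v = (-a) \<bullet> gbar" using coreK[OF supp contg] by blast
      moreover have "y \<in> K" using y rel_interior_subset by blast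
      ultimately have "a \<bullet> y = a \<bullet> gbar" by simp
      then show False using a(2)[OF y] by simp
    qed
  qed
  have part2: "gbar \<in> interior K"
    if supp: "\<forall>i<N. measure_support (?T i) (\<mu> i) = M i"
      and contg: "\<forall>k. continuous_map (?T (owner k)) euclideanreal (g k)"
      and aff: "\<forall>i<N. \<exists>xs :: nat \<Rightarrow> 'a. (\<forall>j\<le>mblock i. xs j \<in> M i)
               \<and> inj_on (\<lambda>j. gblock i (xs j)) {..mblock i}
               \<and> \<not> affine_dependent ((\<lambda>j. gblock i (xs j)) ` {..mblock i})"
  proof (rule ccontr)
    assume ni: "gbar \<notin> interior K"
    have ri: "gbar \<in> rel_interior K" using part1[OF supp contg] .
    have "interior K = {}"
    proof (rule ccontr)
      assume "interior K \<noteq> {}"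
      then have "affine hull K = UNIV" by (rule affine_hull_nonempty_interior)
      then show False using ri ni rel_interior_interior by blast
    qed
    then obtain a b where a0: "a \<noteq> 0" and ab: "K \<subseteq> {x. a \<bullet> x = b}"
      using empty_interior_subset_hyperplane[OF convK] by blast
    have "gbar \<in> K" using ri rel_interior_subset by blast
    then have eqb: "a \<bullet> gbar = b" using ab by blast
    have le: "\<forall>x\<in>PiE {..<N} M. a \<bullet> G x \<le> a \<bullet> gbar"
    proof
      fix x assume "x \<in> PiE {..<N} M"
      then have "G x \<in> K" by (rule GK)
      then show "a \<bullet> G x \<le> a \<bullet> gbar" using ab eqb by auto
    qed
    have c: "\<forall>i<N. \<forall>y\<in>M i. phi a i y = integral\<^sup>L (\<mu> i) (phi a i)" using core[OF supp contg le] .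
    have "a$k = 0" for k
    proof -
      let ?i = "owner k"
      have i: "?i < N" using owner .
      obtain xs where xs: "\<forall>j\<le>mblock ?i. xs j \<in> M ?i"
        "inj_on (\<lambda>j. gblock ?i (xs j)) {..mblock ?i}"
        "\<not> affine_dependent ((\<lambda>j. gblock ?i (xs j)) ` {..mblock ?i})"
        using aff i by blast
      show "a$k = 0"
      proof (rule block_zero[where gb = "gblock ?i" and owner = owner and i = ?i])
        show "gblock ?i y $ k' = 0" if "owner k' \<noteq> ?i" for y k' using that by (simp add: gblock_def)
        show "a \<bullet> gblock ?i (xs j) = integral\<^sup>L (\<mu> ?i) (phi a ?i)" if "j \<le> mblock ?i" for j
          using c i xs(1) that gblock_phi by auto
      qed (use xs in \<open>auto simp: mblock_def\<close>)
    qed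
    then have "a = 0" by (simp add: vec_eq_iff)
    then show False using a0 by simp
  qed
  have part3': "closed C"
    if cpt: "\<forall>i<N. compact_space (?T i)"
      and contg: "\<forall>k. continuous_map (?T (owner k)) euclideanreal (g k)"
      and contf: "continuous_map (product_topology ?T {..<N}) euclideanreal f"
  proof -
    let ?F = "\<lambda>x. (1::real, G x, f x)"
    have "compact_space (product_topology ?T {..<N})"
      using cpt by (simp add: compact_space_product_topology)
    moreover have "continuous_map (product_topology ?T {..<N}) (prod_topology euclideanreal (prod_topology euclidean euclideanreal)) ?F"
    proof (intro continuous_map_pairedI)
      show "continuous_map (product_topology ?T {..<N}) euclideanreal (\<lambda>x. 1::real)" by simp
      show "continuous_map (product_topology ?T {..<N}) euclideanreal f" using contf .
      show "continuous_map (product_topology ?T {..<N}) euclidean G" unfolding G_def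
      proof (rule vec_cont)
        fix k
        have "continuous_map (product_topology ?T {..<N}) (?T (owner k)) (\<lambda>x. x (owner k))"
          using owner[of k] by (intro continuous_map_product_projection) auto
        from continuous_map_compose[OF this contg[rule_format, of k]]
        show "continuous_map (product_topology ?T {..<N}) euclideanreal (\<lambda>x. g k (x (owner k)))"
          by (simp add: o_def)
      qed
    qed
    ultimately have "closed (convex_cone hull (?F ` topspace (product_topology ?T {..<N})))"
      by (intro part3) (auto simp: prod_topology_euclidean)
    then show ?thesis unfolding topP C_def G_def by simp
  qed
  show ?thesis using part1 part2 part3' by blast
qed

end
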